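(* Let $(R,\mathfrak{m})$ be a Noetherian local ring and let $I$ be an ideal of $R$. Let $N>\mathrm{AR}(\mathfrak{m},I\subseteq R)$. If $J$ is an ideal of $R$ such that $I+\mathfrak{m}^N=J+\mathfrak{m}^N$, then $\mu(I)\le\mu(J)$.
   Context: $\mu(-)$ denotes the minimal number of generators. $\mathrm{AR}(\mathfrak{m},I\subseteq R)$ is the least integer $s$ with $\mathfrak{m}^n\cap I=\mathfrak{m}^{n-s}(\mathfrak{m}^s\cap I)$ for all $n\ge s$. *)

theory Defs
  imports "HOL-Algebra.Ideal_Product" "HOL-Algebra.Ring_Divisibility"
begin

fun ideal_pow :: "('a, 'b) ring_scheme \<Rightarrow> 'a set \<Rightarrow> nat \<Rightarrow> 'a set" where
  "ideal_pow R I 0 = carrier R"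
| "ideal_pow R I (Suc n) = ideal_prod R (ideal_pow R I n) I"

definition local_ring :: "('a, 'b) ring_scheme \<Rightarrow> 'a set \<Rightarrow> bool" where
  "local_ring R m \<longleftrightarrow> cring R \<and> maximalideal m R \<and> (\<forall>M. maximalideal M R \<longrightarrow> M = m)"

definition min_gens :: "('a, 'b) ring_scheme \<Rightarrow> 'a set \<Rightarrow> nat" where
  "min_gens R I = (LEAST n. \<exists>S. finite S \<and> card S = n \<and> S \<subseteq> carrier R \<and> genideal R S = I)"

definition AR_number :: "('a, 'b) ring_scheme \<Rightarrow> 'a set \<Rightarrow> 'a set \<Rightarrow> nat" where
  "AR_number R m I = (LEAST s. \<forall>n\<ge>s.
      ideal_pow R m n \<inter> I = ideal_prod R (ideal_pow R m (n - s)) (ideal_pow R m s \<inter> I))"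

end

theory Submission
  imports Defs "HOL-Library.Ramsey"
begin

locale arset = cring R for R (structure) +
  fixes r :: nat and x :: "nat \<Rightarrow> 'a" and I :: "'a set"
  assumes x_carr: "\<And>i. x i \<in> carrier R" and I_ideal: "ideal I R"
begin

definition MIall :: "(nat \<Rightarrow> nat) set" where "MIall = {\<alpha>. \<forall>i\<ge>r. \<alpha> i = 0}"
definition deg :: "(nat \<Rightarrow> nat) \<Rightarrow> nat" where "deg \<alpha> = (\<Sum>i<r. \<alpha> i)"
definition MI :: "nat \<Rightarrow> (nat \<Rightarrow> nat) set" where "MI n = {\<alpha> \<in> MIall. deg \<alpha> = n}"
definition mono :: "(nat \<Rightarrow> nat) \<Rightarrow> 'a" where "mono \<alpha> = (\<Otimes>i\<in>{..<r}. x i [^] \<alpha> i)"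
definition hp :: "nat \<Rightarrow> ((nat \<Rightarrow> nat) \<Rightarrow> 'a) \<Rightarrow> bool" where
  "hp n F \<longleftrightarrow> (\<forall>\<alpha>. F \<alpha> \<in> carrier R) \<and> (\<forall>\<alpha>. \<alpha> \<notin> MI n \<longrightarrow> F \<alpha> = \<zero>)"
definition ev :: "nat \<Rightarrow> ((nat \<Rightarrow> nat) \<Rightarrow> 'a) \<Rightarrow> 'a" where
  "ev n F = (\<Oplus>\<alpha>\<in>MI n. F \<alpha> \<otimes> mono \<alpha>)"

lemma finite_MI: "finite (MI n)"
proof -
  have "MI n \<subseteq> {f::nat\<Rightarrow>nat. \<forall>i. (i \<in> {..<r} \<longrightarrow> f i \<in> {..n}) \<and> (i \<notin> {..<r} \<longrightarrow> f i = 0)}"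
  proof (clarsimp simp: MI_def MIall_def deg_def)
    fix f :: "nat \<Rightarrow> nat" and i assume "\<forall>i\<ge>r. f i = 0" "i < r"
    then show "f i \<le> (\<Sum>i<r. f i)"
      using member_le_sum[of i "{..<r}" f] by auto
  qed
  moreover have "finite {f. \<forall>i. (i \<in> {..<r} \<longrightarrow> f i \<in> {..n}) \<and> (i \<notin> {..<r} \<longrightarrow> f i = (0::nat))}"
    by (rule finite_set_of_finite_funs) auto
  ultimately show ?thesis by (rule finite_subset)
qed

lemma mono_carr[simp]: "mono \<alpha> \<in> carrier R"
  unfolding mono_def by (auto intro: finprod_closed simp: x_carr)

lemma mono_add: "mono (\<lambda>i. \<alpha> i + \<beta> i) = mono \<alpha> \<otimes> mono \<beta>"
  unfolding mono_def
  by (simp add: nat_pow_mult[symmetric] x_carr finprod_multf Pi_def)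

lemma ev_carr[simp]: "hp n F \<Longrightarrow> ev n F \<in> carrier R"
  unfolding ev_def hp_def by (auto intro: finsum_closed)

lemma hp_add: "hp n F \<Longrightarrow> hp n G \<Longrightarrow> hp n (\<lambda>\<alpha>. F \<alpha> \<oplus> G \<alpha>)"
  unfolding hp_def by auto

lemma ev_add: "hp n F \<Longrightarrow> hp n G \<Longrightarrow> ev n (\<lambda>\<alpha>. F \<alpha> \<oplus> G \<alpha>) = ev n F \<oplus> ev n G"
  unfolding ev_def hp_def
  by (simp add: l_distr finsum_addf Pi_def)

lemma hp_smult: "c \<in> carrier R \<Longrightarrow> hp n F \<Longrightarrow> hp n (\<lambda>\<alpha>. c \<otimes> F \<alpha>)"
  unfolding hp_def by auto

lemma ev_smult: "c \<in> carrier R \<Longrightarrow> hp n F \<Longrightarrow> ev n (\<lambda>\<alpha>. c \<otimes> F \<alpha>) = c \<otimes> ev n F"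
  unfolding ev_def hp_def
  by (simp add: finsum_rdistr finite_MI m_assoc Pi_def)

lemma hp_minus: "hp n F \<Longrightarrow> hp n G \<Longrightarrow> hp n (\<lambda>\<alpha>. F \<alpha> \<ominus> G \<alpha>)"
  unfolding hp_def by auto

lemma ev_minus: "hp n F \<Longrightarrow> hp n G \<Longrightarrow> ev n (\<lambda>\<alpha>. F \<alpha> \<ominus> G \<alpha>) = ev n F \<ominus> ev n G"
proof -
  assume F: "hp n F" and G: "hp n G"
  have G': "hp n (\<lambda>\<alpha>. (\<ominus> \<one>) \<otimes> G \<alpha>)" using hp_smult[OF _ G] by simp
  have "(\<lambda>\<alpha>. F \<alpha> \<ominus> G \<alpha>) = (\<lambda>\<alpha>. F \<alpha> \<oplus> (\<ominus> \<one>) \<otimes> G \<alpha>)"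
    using G unfolding hp_def by (auto simp: minus_eq l_minus)
  then show ?thesis using ev_add[OF F G'] ev_smult[OF _ G, of "\<ominus> \<one>"] F G
    by (simp add: minus_eq l_minus)
qed

lemma hp_zero: "hp n (\<lambda>\<alpha>. \<zero>)" unfolding hp_def by auto
lemma ev_zero: "ev n (\<lambda>\<alpha>. \<zero>) = \<zero>" unfolding ev_def by (simp add: finsum_zero)

end

context arset begin

definition shift :: "(nat \<Rightarrow> nat) \<Rightarrow> ((nat \<Rightarrow> nat) \<Rightarrow> 'a) \<Rightarrow> (nat \<Rightarrow> nat) \<Rightarrow> 'a" where
  "shift \<gamma> F \<delta> = (if (\<forall>i. \<gamma> i \<le> \<delta> i) then F (\<lambda>i. \<delta> i - \<gamma> i) else \<zero>)"

lemma deg_add: "deg (\<lambda>i. \<alpha> i + \<beta> i) = deg \<alpha> + deg \<beta>"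
  unfolding deg_def by (simp add: sum.distrib)

lemma MIall_add: "\<alpha> \<in> MIall \<Longrightarrow> \<beta> \<in> MIall \<Longrightarrow> (\<lambda>i. \<alpha> i + \<beta> i) \<in> MIall"
  unfolding MIall_def by auto

lemma hp_shift:
  assumes F: "hp n F" and g: "\<gamma> \<in> MIall"
  shows "hp (n + deg \<gamma>) (shift \<gamma> F)"
  unfolding hp_def
proof safe
  fix \<alpha> show "shift \<gamma> F \<alpha> \<in> carrier R" using F unfolding hp_def shift_def by auto
next
  fix \<delta> assume nd: "\<delta> \<notin> MI (n + deg \<gamma>)"
  show "shift \<gamma> F \<delta> = \<zero>"
  proof (cases "\<forall>i. \<gamma> i \<le> \<delta> i")
    case True
    have eq: "\<delta> = (\<lambda>i. (\<delta> i - \<gamma> i) + \<gamma> i)" using True by auto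
    have "(\<lambda>i. \<delta> i - \<gamma> i) \<notin> MI n"
    proof
      assume a: "(\<lambda>i. \<delta> i - \<gamma> i) \<in> MI n"
      then have "\<delta> \<in> MI (n + deg \<gamma>)"
        using g MIall_add[of "(\<lambda>i. \<delta> i - \<gamma> i)" \<gamma>] deg_add[of "(\<lambda>i. \<delta> i - \<gamma> i)" \<gamma>]
        by (subst eq) (auto simp: MI_def)
      with nd show False by simp
    qed
    then show ?thesis using F True unfolding hp_def shift_def by auto
  qed (auto simp: shift_def)
qed

lemma ev_shift:
  assumes F: "hp n F" and g: "\<gamma> \<in> MIall"
  shows "ev (n + deg \<gamma>) (shift \<gamma> F) = ev n F \<otimes> mono \<gamma>"
proof -
  let ?t = "\<lambda>\<alpha> i. \<alpha> i + \<gamma> i"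
  let ?h = "\<lambda>\<delta>. shift \<gamma> F \<delta> \<otimes> mono \<delta>"
  have Fc: "\<And>\<alpha>. F \<alpha> \<in> carrier R" using F unfolding hp_def by auto
  have sc: "\<And>\<alpha>. shift \<gamma> F \<alpha> \<in> carrier R" using Fc unfolding shift_def by auto
  have sub: "?t ` MI n \<subseteq> MI (n + deg \<gamma>)"
    using g MIall_add deg_add unfolding MI_def by auto
  have "ev (n + deg \<gamma>) (shift \<gamma> F) = (\<Oplus>\<delta>\<in>?t ` MI n. ?h \<delta>)"
    unfolding ev_def
  proof (rule add.finprod_mono_neutral_cong_right[OF finite_MI sub])
    fix \<delta> assume d: "\<delta> \<in> MI (n + deg \<gamma>) - ?t ` MI n"
    have "shift \<gamma> F \<delta> = \<zero>"
    proof (cases "\<forall>i. \<gamma> i \<le> \<delta> i")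
      case True
      have eq: "\<delta> = ?t (\<lambda>i. \<delta> i - \<gamma> i)" using True by auto
      have "(\<lambda>i. \<delta> i - \<gamma> i) \<notin> MI n"
      proof
        assume "(\<lambda>i. \<delta> i - \<gamma> i) \<in> MI n"
        then have "?t (\<lambda>i. \<delta> i - \<gamma> i) \<in> ?t ` MI n" by (rule imageI)
        with d eq show False by auto
      qed
      then show ?thesis using F True unfolding hp_def shift_def by auto
    qed (auto simp: shift_def)
    then show "?h \<delta> = \<zero>" by simp
  qed (auto simp: sc)
  also have "\<dots> = (\<Oplus>\<alpha>\<in>MI n. ?h (?t \<alpha>))"
    by (rule finsum_reindex) (auto simp: sc inj_on_def fun_eq_iff)
  also have "\<dots> = (\<Oplus>\<alpha>\<in>MI n. (F \<alpha> \<otimes> mono \<alpha>) \<otimes> mono \<gamma>)"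
    by (rule finsum_cong') (auto simp: shift_def mono_add Fc m_assoc)
  also have "\<dots> = ev n F \<otimes> mono \<gamma>"
    unfolding ev_def by (rule finsum_ldistr[symmetric]) (auto simp: finite_MI Fc)
  finally show ?thesis .
qed

lemma shift_at: "shift \<gamma> F (\<lambda>i. \<alpha> i + \<gamma> i) = F \<alpha>"
  unfolding shift_def by simp

end

context cring begin

lemma pow_ideal: "ideal m R \<Longrightarrow> ideal (ideal_pow R m n) R"
  by (induct n) (auto intro: oneideal ideal_prod_is_ideal)

lemma prod_mono:
  assumes "A \<subseteq> A'" "B \<subseteq> B'"
  shows "ideal_prod R A B \<subseteq> ideal_prod R A' B'"
proof
  fix s assume "s \<in> ideal_prod R A B"
  then show "s \<in> ideal_prod R A' B'"
    by (induct s rule: ideal_prod.induct) (use assms in \<open>auto intro: ideal_prod.intros\<close>)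
qed

lemma carrier_prod: "ideal X R \<Longrightarrow> ideal_prod R (carrier R) X = X"
  using ideal_prod_commute[OF oneideal] ideal_prod_one by auto

lemma pow_add: "ideal m R \<Longrightarrow> ideal_prod R (ideal_pow R m a) (ideal_pow R m b) = ideal_pow R m (a + b)"
proof (induct b)
  case 0 then show ?case using ideal_prod_one[OF pow_ideal] by simp
next
  case (Suc b)
  have "ideal_prod R (ideal_pow R m a) (ideal_pow R m (Suc b)) =
        ideal_prod R (ideal_prod R (ideal_pow R m a) (ideal_pow R m b)) m"
    using ideal_prod_assoc[OF pow_ideal[OF Suc(2), of a] pow_ideal[OF Suc(2), of b] Suc(2)] by simp
  then show ?case using Suc by simp
qed

lemma pow_Suc': "ideal m R \<Longrightarrow> ideal_pow R m (Suc n) = ideal_prod R m (ideal_pow R m n)"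
  using ideal_prod_commute[OF pow_ideal] by simp

lemma pow_Suc_sub: "ideal m R \<Longrightarrow> ideal_pow R m (Suc n) \<subseteq> m"
  using ideal_prod_inter[OF pow_ideal] by force

lemma ideal_finsum:
  assumes "ideal K R" "finite A" "\<And>a. a \<in> A \<Longrightarrow> f a \<in> K"
  shows "finsum R f A \<in> K"
  using assms(2,3)
proof (induct A rule: finite_induct)
  case empty then show ?case using assms(1) by (simp add: additive_subgroup.zero_closed ideal.axioms(1))
next
  case (insert a A)
  have "f \<in> A \<rightarrow> carrier R" "f a \<in> carrier R" using insert ideal.Icarr[OF assms(1)] by blast+
  then show ?case using insert assms(1)
    by (simp add: finsum_insert additive_subgroup.a_closed ideal.axioms(1))
qed

end

context arset begin

definition mm :: "'a set" where "mm = Idl (x ` {..<r})"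

lemma mm_ideal: "ideal mm R"
  unfolding mm_def by (rule genideal_ideal) (auto simp: x_carr)

lemma x_in_mm: "i < r \<Longrightarrow> x i \<in> mm"
  unfolding mm_def using genideal_self[of "x ` {..<r}"] x_carr by blast

definition ee :: "nat \<Rightarrow> nat \<Rightarrow> nat" where "ee i = (\<lambda>j. if j = i then 1 else 0)"

lemma mono_ee: "i < r \<Longrightarrow> mono (ee i) = x i"
proof -
  assume i: "i < r"
  have "mono (ee i) = (\<Otimes>j\<in>{..<r}. if j = i then x j else \<one>)"
    unfolding mono_def ee_def by (rule finprod_cong') (auto simp: x_carr)
  also have "\<dots> = x i" using finprod_singleton_swap[of i "{..<r}" x] i by (auto simp: x_carr)
  finally show ?thesis .
qed

lemma ee_MIall: "i < r \<Longrightarrow> ee i \<in> MIall" unfolding ee_def MIall_def by auto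
lemma deg_ee: "i < r \<Longrightarrow> deg (ee i) = 1"
  unfolding deg_def ee_def by (simp add: sum.delta)

lemma mono_pow: "mono \<alpha> \<in> ideal_pow R mm (deg \<alpha>)"
proof (induct "deg \<alpha>" arbitrary: \<alpha>)
  case 0
  then have "\<forall>i<r. \<alpha> i = 0" unfolding deg_def by simp
  then have "mono \<alpha> = \<one>" unfolding mono_def by (intro finprod_one_eqI) simp
  then show ?case using 0 by (metis ideal_pow.simps(1) one_closed)
next
  case (Suc n)
  then obtain i where i: "i < r" "\<alpha> i > 0"
    unfolding deg_def by (metis gr0I lessThan_iff sum.neutral nat.distinct(1))
  define \<alpha>' where "\<alpha>' = \<alpha>(i := \<alpha> i - 1)"
  have eq: "\<alpha> = (\<lambda>j. \<alpha>' j + ee i j)" using i unfolding \<alpha>'_def ee_def by auto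
  have "deg \<alpha> = deg \<alpha>' + 1" using deg_add[of \<alpha>' "ee i"] deg_ee[OF i(1)] eq by simp
  then have d: "deg \<alpha>' = n" using Suc(2) by simp
  have "mono \<alpha> = mono \<alpha>' \<otimes> x i" using mono_add[of \<alpha>' "ee i"] eq mono_ee[OF i(1)] by simp
  also have "\<dots> \<in> ideal_prod R (ideal_pow R mm n) mm"
    by (rule ideal_prod.prod) (use Suc(1)[OF d[symmetric]] d x_in_mm[OF i(1)] in auto)
  finally show ?case using Suc(2) by (metis ideal_pow.simps(2))
qed

lemma ev_pow: "hp n F \<Longrightarrow> ev n F \<in> ideal_pow R mm n"
  unfolding ev_def
proof (rule ideal_finsum[OF pow_ideal[OF mm_ideal] finite_MI])
  fix \<alpha> assume F: "hp n F" and a: "\<alpha> \<in> MI n"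
  then show "F \<alpha> \<otimes> mono \<alpha> \<in> ideal_pow R mm n"
    using mono_pow[of \<alpha>] ideal.I_l_closed[OF pow_ideal[OF mm_ideal]] unfolding hp_def MI_def by auto
qed

end

context cring begin

lemma idealI':
  assumes sub: "K \<subseteq> carrier R" and z: "\<zero> \<in> K" and ad: "\<And>a b. a \<in> K \<Longrightarrow> b \<in> K \<Longrightarrow> a \<oplus> b \<in> K"
    and sm: "\<And>a c. a \<in> K \<Longrightarrow> c \<in> carrier R \<Longrightarrow> c \<otimes> a \<in> K"
  shows "ideal K R"
proof (rule idealI)
  show "ring R" by (rule ring_axioms)
  have inv: "\<ominus> a \<in> K" if a: "a \<in> K" for a
  proof -
    have "\<ominus> a = (\<ominus> \<one>) \<otimes> a" using a sub by (simp add: l_minus subsetD)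
    then show ?thesis using sm[OF a, of "\<ominus> \<one>"] by simp
  qed
  show "subgroup K (add_monoid R)"
    by (rule add.subgroupI) (use sub z ad inv in auto)
  fix a c assume "a \<in> K" "c \<in> carrier R"
  then show "c \<otimes> a \<in> K" "a \<otimes> c \<in> K" using sm[of a c] sub m_comm[of a c] by (auto simp del: m_comm)
qed

lemma colon_ideal:
  assumes K: "ideal K R" and a: "a \<in> carrier R"
  shows "ideal {j \<in> carrier R. a \<otimes> j \<in> K} R"
proof (rule idealI')
  show "\<zero> \<in> {j \<in> carrier R. a \<otimes> j \<in> K}" using a K by (simp add: additive_subgroup.zero_closed ideal.axioms(1))
next
  fix u v assume "u \<in> {j \<in> carrier R. a \<otimes> j \<in> K}" "v \<in> {j \<in> carrier R. a \<otimes> j \<in> K}"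
  then show "u \<oplus> v \<in> {j \<in> carrier R. a \<otimes> j \<in> K}"
    using a K by (simp add: r_distr additive_subgroup.a_closed ideal.axioms(1))
next
  fix u c assume "u \<in> {j \<in> carrier R. a \<otimes> j \<in> K}" "c \<in> carrier R"
  then show "c \<otimes> u \<in> {j \<in> carrier R. a \<otimes> j \<in> K}"
    using a K ideal.I_l_closed[OF K, of "a \<otimes> u" c] by (simp add: m_lcomm)
qed auto

end

context arset begin

definition EE :: "nat \<Rightarrow> 'a set" where "EE n = {ev n F | F. hp n F}"

lemma EE_I: "hp n F \<Longrightarrow> ev n F \<in> EE n" unfolding EE_def by blast

lemma EE_E: "a \<in> EE n \<Longrightarrow> (\<And>F. hp n F \<Longrightarrow> a = ev n F \<Longrightarrow> P) \<Longrightarrow> P"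
  unfolding EE_def by blast

lemma EE_ideal: "ideal (EE n) R"
proof (rule idealI')
  show "EE n \<subseteq> carrier R" by (auto elim: EE_E)
  show "\<zero> \<in> EE n" using EE_I[OF hp_zero[of n]] ev_zero[of n] by simp
  fix a b assume "a \<in> EE n" "b \<in> EE n"
  then obtain F G where "hp n F" "a = ev n F" "hp n G" "b = ev n G" by (auto elim!: EE_E)
  then show "a \<oplus> b \<in> EE n" using EE_I[OF hp_add] ev_add by simp
next
  fix a c assume "a \<in> EE n" "c \<in> carrier R"
  then obtain F where "hp n F" "a = ev n F" by (auto elim!: EE_E)
  then show "c \<otimes> a \<in> EE n" using EE_I[OF hp_smult] ev_smult \<open>c \<in> carrier R\<close> by simp
qed

lemma MI0: "MI 0 = {(\<lambda>_. 0)}"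
proof -
  have "\<alpha> = (\<lambda>_. 0)" if "\<alpha> \<in> MI 0" for \<alpha>
  proof
    fix i show "\<alpha> i = 0" using that unfolding MI_def MIall_def deg_def
      by (cases "i < r") auto
  qed
  moreover have "(\<lambda>_. 0) \<in> MI 0" unfolding MI_def MIall_def deg_def by auto
  ultimately show ?thesis by blast
qed

lemma mono0: "mono (\<lambda>_. 0) = \<one>" unfolding mono_def by simp

lemma pow_EE: "ideal_pow R mm n \<subseteq> EE n"
proof (induct n)
  case 0
  show ?case
  proof
    fix c assume c: "c \<in> ideal_pow R mm 0"
    let ?F = "\<lambda>\<alpha>. if \<alpha> = (\<lambda>_. 0) then c else \<zero>"
    have "hp 0 ?F" using c MI0 unfolding hp_def by auto
    moreover have "ev 0 ?F = c" unfolding ev_def MI0 using c mono0 by simp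
    ultimately show "c \<in> EE 0" using EE_I by metis
  qed
next
  case (Suc n)
  have "ideal_pow R mm (Suc n) = Idl (ideal_pow R mm n <#> mm)"
    using ideal_prod_eq_genideal[OF pow_ideal[OF mm_ideal] mm_ideal] by simp
  also have "\<dots> \<subseteq> EE (Suc n)"
  proof (rule genideal_minimal[OF EE_ideal])
    show "ideal_pow R mm n <#> mm \<subseteq> EE (Suc n)"
    proof
      fix s assume "s \<in> ideal_pow R mm n <#> mm"
      then obtain i j where ij: "i \<in> ideal_pow R mm n" "j \<in> mm" "s = i \<otimes> j"
        unfolding set_mult_def by blast
      obtain F where F: "hp n F" "i = ev n F" using Suc ij(1) by (auto elim: EE_E)
      have "mm \<subseteq> {j \<in> carrier R. ev n F \<otimes> j \<in> EE (Suc n)}"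
        unfolding mm_def
      proof (rule genideal_minimal[OF colon_ideal[OF EE_ideal]])
        show "ev n F \<in> carrier R" using F by simp
        show "x ` {..<r} \<subseteq> {j \<in> carrier R. ev n F \<otimes> j \<in> EE (Suc n)}"
        proof clarify
          fix k assume k: "k < r"
          have "ev n F \<otimes> x k = ev (n + deg (ee k)) (shift (ee k) F)"
            using ev_shift[OF F(1) ee_MIall[OF k]] mono_ee[OF k] by simp
          moreover have "hp (n + deg (ee k)) (shift (ee k) F)" using hp_shift[OF F(1) ee_MIall[OF k]] .
          ultimately show "x k \<in> carrier R \<and> ev n F \<otimes> x k \<in> EE (Suc n)"
            using EE_I deg_ee[OF k] x_carr by simp
        qed
      qed
      then show "s \<in> EE (Suc n)" using ij F by auto
    qed
  qed
  finally show ?case .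
qed

end

definition lexless :: "(nat \<Rightarrow> nat) \<Rightarrow> (nat \<Rightarrow> nat) \<Rightarrow> bool" where
  "lexless \<alpha> \<beta> \<longleftrightarrow> (\<exists>k. \<alpha> k < \<beta> k \<and> (\<forall>j<k. \<alpha> j = \<beta> j))"

lemma lex_irrefl: "\<not> lexless \<alpha> \<alpha>" unfolding lexless_def by auto

lemma lex_trans: "lexless \<alpha> \<beta> \<Longrightarrow> lexless \<beta> \<gamma> \<Longrightarrow> lexless \<alpha> \<gamma>"
  unfolding lexless_def
proof (elim exE conjE)
  fix k1 k2 assume a: "\<alpha> k1 < \<beta> k1" "\<forall>j<k1. \<alpha> j = \<beta> j" "\<beta> k2 < \<gamma> k2" "\<forall>j<k2. \<beta> j = \<gamma> j"
  show "\<exists>k. \<alpha> k < \<gamma> k \<and> (\<forall>j<k. \<alpha> j = \<gamma> j)"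
  proof (cases k1 k2 rule: linorder_cases)
    case less then show ?thesis using a by (intro exI[of _ k1]) auto
  next
    case equal then show ?thesis using a by (intro exI[of _ k1]) auto
  next
    case greater then show ?thesis using a by (intro exI[of _ k2]) auto
  qed
qed

lemma lex_asym: "lexless \<alpha> \<beta> \<Longrightarrow> \<not> lexless \<beta> \<alpha>"
  using lex_trans lex_irrefl by blast

lemma lex_total: "\<alpha> \<noteq> \<beta> \<Longrightarrow> lexless \<alpha> \<beta> \<or> lexless \<beta> \<alpha>"
proof -
  assume "\<alpha> \<noteq> \<beta>"
  then obtain k0 where "\<alpha> k0 \<noteq> \<beta> k0" by auto
  define k where "k = (LEAST k. \<alpha> k \<noteq> \<beta> k)"
  have k: "\<alpha> k \<noteq> \<beta> k" unfolding k_def by (rule LeastI[of _ k0]) fact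
  have "\<forall>j<k. \<alpha> j = \<beta> j" unfolding k_def using not_less_Least by blast
  then show ?thesis unfolding lexless_def using k
    by (metis linorder_neqE_nat)
qed

lemma lex_add: "lexless (\<lambda>i. \<alpha> i + \<gamma> i) (\<lambda>i. \<beta> i + \<gamma> i) \<longleftrightarrow> lexless \<alpha> \<beta>"
  unfolding lexless_def by auto

context arset begin

definition LC :: "(nat \<Rightarrow> nat) \<Rightarrow> 'a set" where
  "LC \<alpha> = {c. \<exists>F. hp (deg \<alpha>) F \<and> ev (deg \<alpha>) F \<in> I \<and> F \<alpha> = c \<and> (\<forall>\<gamma>. lexless \<alpha> \<gamma> \<longrightarrow> F \<gamma> = \<zero>)}"

lemma LC_ideal: "ideal (LC \<alpha>) R"
proof (rule idealI')
  show "LC \<alpha> \<subseteq> carrier R" unfolding LC_def hp_def by auto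
  show "\<zero> \<in> LC \<alpha>" unfolding LC_def
    using hp_zero ev_zero additive_subgroup.zero_closed[OF ideal.axioms(1)[OF I_ideal]]
    by (intro CollectI exI[of _ "\<lambda>_. \<zero>"]) auto
next
  fix a b assume "a \<in> LC \<alpha>" "b \<in> LC \<alpha>"
  then obtain F G where F: "hp (deg \<alpha>) F" "ev (deg \<alpha>) F \<in> I" "F \<alpha> = a" "\<forall>\<gamma>. lexless \<alpha> \<gamma> \<longrightarrow> F \<gamma> = \<zero>"
    and G: "hp (deg \<alpha>) G" "ev (deg \<alpha>) G \<in> I" "G \<alpha> = b" "\<forall>\<gamma>. lexless \<alpha> \<gamma> \<longrightarrow> G \<gamma> = \<zero>"
    unfolding LC_def by blast
  have "hp (deg \<alpha>) (\<lambda>\<beta>. F \<beta> \<oplus> G \<beta>)" using hp_add[OF F(1) G(1)] .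
  moreover have "ev (deg \<alpha>) (\<lambda>\<beta>. F \<beta> \<oplus> G \<beta>) \<in> I"
    using ev_add[OF F(1) G(1)] F(2) G(2) additive_subgroup.a_closed[OF ideal.axioms(1)[OF I_ideal]] by simp
  moreover have "\<forall>\<gamma>. lexless \<alpha> \<gamma> \<longrightarrow> F \<gamma> \<oplus> G \<gamma> = \<zero>" using F(4) G(4) by simp
  ultimately show "a \<oplus> b \<in> LC \<alpha>" unfolding LC_def using F(3) G(3) by blast
next
  fix a c assume "a \<in> LC \<alpha>" and c: "c \<in> carrier R"
  then obtain F where F: "hp (deg \<alpha>) F" "ev (deg \<alpha>) F \<in> I" "F \<alpha> = a" "\<forall>\<gamma>. lexless \<alpha> \<gamma> \<longrightarrow> F \<gamma> = \<zero>"
    unfolding LC_def by blast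
  have "hp (deg \<alpha>) (\<lambda>\<beta>. c \<otimes> F \<beta>)" using hp_smult[OF c F(1)] .
  moreover have "ev (deg \<alpha>) (\<lambda>\<beta>. c \<otimes> F \<beta>) \<in> I"
    using ev_smult[OF c F(1)] F(2) ideal.I_l_closed[OF I_ideal _ c] by simp
  moreover have "\<forall>\<gamma>. lexless \<alpha> \<gamma> \<longrightarrow> c \<otimes> F \<gamma> = \<zero>" using F(4) c by simp
  ultimately show "c \<otimes> a \<in> LC \<alpha>" unfolding LC_def using F(3) by blast
qed

lemma shift_prop:
  assumes F: "hp (deg \<alpha>) F" "ev (deg \<alpha>) F \<in> I" "\<forall>\<gamma>. lexless \<alpha> \<gamma> \<longrightarrow> F \<gamma> = \<zero>"
    and g: "\<gamma> \<in> MIall" and \<beta>: "\<beta> = (\<lambda>i. \<alpha> i + \<gamma> i)"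
  shows "hp (deg \<beta>) (shift \<gamma> F)" "ev (deg \<beta>) (shift \<gamma> F) = ev (deg \<alpha>) F \<otimes> mono \<gamma>"
    "ev (deg \<beta>) (shift \<gamma> F) \<in> I" "shift \<gamma> F \<beta> = F \<alpha>"
    "\<forall>\<delta>. lexless \<beta> \<delta> \<longrightarrow> shift \<gamma> F \<delta> = \<zero>"
proof -
  have d: "deg \<beta> = deg \<alpha> + deg \<gamma>" using \<beta> deg_add by simp
  show "hp (deg \<beta>) (shift \<gamma> F)" using hp_shift[OF F(1) g] d by simp
  show e: "ev (deg \<beta>) (shift \<gamma> F) = ev (deg \<alpha>) F \<otimes> mono \<gamma>" using ev_shift[OF F(1) g] d by simp
  show "ev (deg \<beta>) (shift \<gamma> F) \<in> I" using e F(2) ideal.I_r_closed[OF I_ideal] by simp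
  show "shift \<gamma> F \<beta> = F \<alpha>" using \<beta> shift_at by simp
  show "\<forall>\<delta>. lexless \<beta> \<delta> \<longrightarrow> shift \<gamma> F \<delta> = \<zero>"
  proof (intro allI impI)
    fix \<delta> assume l: "lexless \<beta> \<delta>"
    show "shift \<gamma> F \<delta> = \<zero>"
    proof (cases "\<forall>i. \<gamma> i \<le> \<delta> i")
      case True
      have "\<delta> = (\<lambda>i. (\<delta> i - \<gamma> i) + \<gamma> i)" using True by auto
      then have "lexless \<alpha> (\<lambda>i. \<delta> i - \<gamma> i)" using l \<beta> lex_add[of \<alpha> \<gamma> "\<lambda>i. \<delta> i - \<gamma> i"] by simp
      then show ?thesis using F(3) True unfolding shift_def by simp
    next
      case False then show ?thesis unfolding shift_def by auto
    qed
  qed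
qed

lemma LC_mono:
  assumes "\<alpha> \<in> MIall" "\<beta> \<in> MIall" "\<forall>i. \<alpha> i \<le> \<beta> i"
  shows "LC \<alpha> \<subseteq> LC \<beta>"
proof
  fix c assume "c \<in> LC \<alpha>"
  then obtain F where F: "hp (deg \<alpha>) F" "ev (deg \<alpha>) F \<in> I" "F \<alpha> = c" "\<forall>\<gamma>. lexless \<alpha> \<gamma> \<longrightarrow> F \<gamma> = \<zero>"
    unfolding LC_def by blast
  define \<gamma> where "\<gamma> = (\<lambda>i. \<beta> i - \<alpha> i)"
  have g: "\<gamma> \<in> MIall" using assms unfolding \<gamma>_def MIall_def by auto
  have b: "\<beta> = (\<lambda>i. \<alpha> i + \<gamma> i)" using assms unfolding \<gamma>_def by auto
  note sp = shift_prop[OF F(1,2,4) g b]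
  show "c \<in> LC \<beta>" unfolding LC_def using sp F(3) by blast
qed

end

lemma (in noetherian_ring) no_strict_chain:
  assumes id: "\<And>n. ideal (C n) R" and st: "\<And>n. C n \<subset> C (Suc n)"
  shows False
proof -
  have mono: "C i \<subseteq> C j" if "i \<le> j" for i j
    using lift_Suc_mono_le[of C, OF _ that] st by blast
  have tot: "\<forall>X\<in>range C. \<forall>Y\<in>range C. X \<subseteq> Y \<or> Y \<subseteq> X"
  proof (intro ballI)
    fix X Y assume "X \<in> range C" "Y \<in> range C"
    then obtain i j where "X = C i" "Y = C j" by auto
    then show "X \<subseteq> Y \<or> Y \<subseteq> X"
      using mono[of i j] mono[of j i] by (cases "i \<le> j") auto
  qed
  have ch: "subset.chain {I. ideal I R} (range C)"
    unfolding pred_on.chain_def using id tot by blast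
  have "\<Union>(range C) \<in> range C" using ideal_chain_is_trivial[OF _ ch] by blast
  then obtain k where k: "\<Union>(range C) = C k" by auto
  have "C (Suc k) \<subseteq> C k" using k by auto
  then show False using st[of k] by auto
qed

lemma nat_no_strict_decr:
  fixes g :: "nat \<Rightarrow> nat"
  assumes "\<And>n. g (Suc n) < g n"
  shows False
proof -
  have "g n + n \<le> g 0" for n
  proof (induct n)
    case (Suc n) then show ?case using assms[of n] by linarith
  qed simp
  from this[of "Suc (g 0)"] show False by simp
qed

lemma (in noetherian_ring) dickson_finite:
  fixes f :: "(nat \<Rightarrow> nat) \<Rightarrow> 'a set" and r :: nat
  defines "MA \<equiv> {\<alpha>::nat\<Rightarrow>nat. \<forall>i\<ge>r. \<alpha> i = 0}"
  assumes id: "\<And>\<alpha>. ideal (f \<alpha>) R"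
    and mono: "\<And>\<alpha> \<beta>. \<alpha> \<in> MA \<Longrightarrow> \<beta> \<in> MA \<Longrightarrow> \<forall>i. \<alpha> i \<le> \<beta> i \<Longrightarrow> f \<alpha> \<subseteq> f \<beta>"
  shows "finite {\<beta> \<in> MA. \<forall>\<alpha>\<in>MA. (\<forall>i. \<alpha> i \<le> \<beta> i) \<and> \<alpha> \<noteq> \<beta> \<longrightarrow> f \<alpha> \<noteq> f \<beta>}"
    (is "finite ?B")
proof (rule ccontr)
  assume "infinite ?B"
  from infinite_iff_countable_subset[THEN iffD1, OF this]
  obtain b :: "nat \<Rightarrow> (nat \<Rightarrow> nat)" where b: "inj b" "range b \<subseteq> ?B"
    by (elim exE conjE)
  define col where "col X = (if \<forall>k<r. b (Min X) k \<le> b (Max X) k then 0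
      else Suc (LEAST k. k < r \<and> b (Max X) k < b (Min X) k))" for X
  have colb: "col {i, j} < Suc r" for i j
  proof (cases "\<forall>k<r. b (Min {i,j}) k \<le> b (Max {i,j}) k")
    case False
    then obtain k where k: "k < r \<and> b (Max {i,j}) k < b (Min {i,j}) k" by (auto simp: not_le)
    have "(LEAST k. k < r \<and> b (Max {i,j}) k < b (Min {i,j}) k) < r"
      using LeastI[of "\<lambda>k. k < r \<and> b (Max {i,j}) k < b (Min {i,j}) k", OF k] by blast
    then show ?thesis using False unfolding col_def by simp
  qed (simp add: col_def)
  obtain Y t where Y: "infinite Y" "t < Suc r" "\<forall>x\<in>Y. \<forall>y\<in>Y. x \<noteq> y \<longrightarrow> col {x, y} = t"
    using Ramsey2[of "UNIV :: nat set" col "Suc r"] colb by auto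
  define e where "e = enumerate Y"
  have eY: "e n \<in> Y" for n unfolding e_def using enumerate_in_set[OF Y(1)] .
  have emono: "i < j \<Longrightarrow> e i < e j" for i j unfolding e_def using enumerate_mono[OF _ Y(1)] .
  have colij: "col {e i, e j} = t" if "i < j" for i j
  proof -
    have "e i \<noteq> e j" using emono[OF that] by simp
    then show ?thesis using Y(3) eY by blast
  qed
  have MinMax: "Min {e i, e j} = e i" "Max {e i, e j} = e j" if "i < j" for i j
    using emono[OF that] by auto
  show False
  proof (cases t)
    case 0
    have le: "\<forall>k. b (e i) k \<le> b (e j) k" if "i < j" for i j
    proof
      fix k
      show "b (e i) k \<le> b (e j) k"
      proof (cases "k < r")
        case True
        have c0: "col {e i, e j} = 0" using colij[OF that] 0 by simp
        have "\<forall>k<r. b (e i) k \<le> b (e j) k"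
        proof (rule ccontr)
          assume nc: "\<not> (\<forall>k<r. b (e i) k \<le> b (e j) k)"
          have "col {e i, e j} \<noteq> 0" unfolding col_def MinMax[OF that] using nc by simp
          with c0 show False by simp
        qed
        then show ?thesis using True by auto
      next
        case False
        have "b (e i) \<in> MA" using subsetD[OF b(2) rangeI] by simp
        then show ?thesis using False unfolding MA_def by auto
      qed
    qed
    have "f (b (e n)) \<subset> f (b (e (Suc n)))" for n
    proof -
      have "e n \<noteq> e (Suc n)" using emono[of n "Suc n"] by simp
      then have ne: "b (e n) \<noteq> b (e (Suc n))" using b(1) by (simp add: inj_eq)
      have inB: "b (e n) \<in> ?B" "b (e (Suc n)) \<in> ?B" using subsetD[OF b(2) rangeI] by this+
      have M1: "b (e n) \<in> MA" using inB(1) by blast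
      have M2: "b (e (Suc n)) \<in> MA" using inB(2) by blast
      have B2: "\<forall>\<alpha>\<in>MA. (\<forall>i. \<alpha> i \<le> b (e (Suc n)) i) \<and> \<alpha> \<noteq> b (e (Suc n)) \<longrightarrow> f \<alpha> \<noteq> f (b (e (Suc n)))"
        using inB(2) by blast
      have len: "\<forall>k. b (e n) k \<le> b (e (Suc n)) k" using le[of n "Suc n"] by simp
      have "f (b (e n)) \<noteq> f (b (e (Suc n)))" using B2 M1 len ne by blast
      moreover have "f (b (e n)) \<subseteq> f (b (e (Suc n)))"
        using mono[OF M1 M2 len] .
      ultimately show ?thesis by auto
    qed
    then show False using no_strict_chain[of "\<lambda>n. f (b (e n))"] id by auto
  next
    case (Suc k)
    have k: "k < r" using Y(2) Suc by simp
    have "b (e (Suc n)) k < b (e n) k" for n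
    proof -
      have n: "n < Suc n" by simp
      have c: "col {e n, e (Suc n)} = Suc k" using colij[OF n] Suc by simp
      let ?P = "\<lambda>k. k < r \<and> b (e (Suc n)) k < b (e n) k"
      have nc: "\<not> (\<forall>k<r. b (e n) k \<le> b (e (Suc n)) k)" and kk: "k = (LEAST k. ?P k)"
        using c MinMax[OF n] unfolding col_def by (auto split: if_splits)
      then obtain k' where "?P k'" by (auto simp: not_le)
      then have "?P (LEAST k. ?P k)" by (rule LeastI)
      then show ?thesis using kk by simp
    qed
    then show False using nat_no_strict_decr[of "\<lambda>n. b (e n) k"] by auto
  qed
qed

lemma lex_max:
  assumes "finite S" "S \<noteq> {}"
  shows "\<exists>\<beta>\<in>S. \<forall>\<gamma>\<in>S. \<not> lexless \<beta> \<gamma>"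
  using assms
proof (induct S rule: finite_ne_induct)
  case (singleton x) then show ?case using lex_irrefl by auto
next
  case (insert x S)
  then obtain \<beta> where b: "\<beta> \<in> S" "\<forall>\<gamma>\<in>S. \<not> lexless \<beta> \<gamma>" by blast
  show ?case
  proof (cases "lexless \<beta> x")
    case True
    have "\<forall>\<gamma>\<in>insert x S. \<not> lexless x \<gamma>"
      using b True lex_trans lex_irrefl by blast
    then show ?thesis by blast
  next
    case False
    then show ?thesis using b by blast
  qed
qed

context arset begin

definition DF :: "nat \<Rightarrow> ((nat \<Rightarrow> nat) \<Rightarrow> 'a) \<Rightarrow> (nat \<Rightarrow> nat) set" where
  "DF n F = {\<gamma> \<in> MI n. \<exists>\<delta>\<in>MI n. F \<delta> \<noteq> \<zero> \<and> (\<gamma> = \<delta> \<or> lexless \<gamma> \<delta>)}"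

lemma ev_zero': "(\<forall>\<delta>\<in>MI n. F \<delta> = \<zero>) \<Longrightarrow> ev n F = \<zero>"
proof -
  assume z: "\<forall>\<delta>\<in>MI n. F \<delta> = \<zero>"
  have "ev n F = (\<Oplus>\<delta>\<in>MI n. \<zero>)" unfolding ev_def by (rule finsum_cong') (auto simp: z)
  then show ?thesis by simp
qed

lemma reduce:
  assumes sA: "\<forall>\<beta>\<in>MIall. deg \<beta> > s \<longrightarrow> (\<exists>\<alpha>\<in>MIall. (\<forall>i. \<alpha> i \<le> \<beta> i) \<and> \<alpha> \<noteq> \<beta> \<and> LC \<alpha> = LC \<beta>)"
    and n: "n > s"
  shows "hp n F \<Longrightarrow> ev n F \<in> I \<Longrightarrow> ev n F \<in> ideal_prod R mm (I \<inter> ideal_pow R mm (n - 1))"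
proof (induct "card (DF n F)" arbitrary: F rule: less_induct)
  case less
  let ?V = "ideal_prod R mm (I \<inter> ideal_pow R mm (n - 1))"
  have Vid: "ideal ?V R"
    by (intro ideal_prod_is_ideal mm_ideal i_intersect I_ideal pow_ideal)
  have F: "hp n F" "ev n F \<in> I" by fact+
  have Fc: "\<And>\<delta>. F \<delta> \<in> carrier R" using F(1) unfolding hp_def by auto
  show ?case
  proof (cases "\<forall>\<delta>\<in>MI n. F \<delta> = \<zero>")
    case True
    then show ?thesis using ev_zero' additive_subgroup.zero_closed[OF ideal.axioms(1)[OF Vid]] by simp
  next
    case False
    let ?S = "{\<delta>\<in>MI n. F \<delta> \<noteq> \<zero>}"
    have "finite ?S" using finite_MI by simp
    moreover have "?S \<noteq> {}" using False by auto
    ultimately obtain \<beta> where b: "\<beta> \<in> ?S" "\<forall>\<gamma>\<in>?S. \<not> lexless \<beta> \<gamma>" using lex_max by blast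
    have Fab: "\<forall>\<gamma>. lexless \<beta> \<gamma> \<longrightarrow> F \<gamma> = \<zero>"
      using b(2) F(1) unfolding hp_def by blast
    have bMI: "\<beta> \<in> MIall" "deg \<beta> = n" using b(1) unfolding MI_def by auto
    then obtain \<alpha> where a: "\<alpha> \<in> MIall" "\<forall>i. \<alpha> i \<le> \<beta> i" "\<alpha> \<noteq> \<beta>" "LC \<alpha> = LC \<beta>"
      using sA n by auto
    define c where "c = F \<beta>"
    have "c \<in> LC \<beta>" unfolding LC_def c_def using F Fab bMI(2) by blast
    then have "c \<in> LC \<alpha>" using a(4) by simp
    then obtain G where G: "hp (deg \<alpha>) G" "ev (deg \<alpha>) G \<in> I" "G \<alpha> = c" "\<forall>\<gamma>. lexless \<alpha> \<gamma> \<longrightarrow> G \<gamma> = \<zero>"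
      unfolding LC_def by blast
    define \<gamma> where "\<gamma> = (\<lambda>i. \<beta> i - \<alpha> i)"
    have g: "\<gamma> \<in> MIall" using a(1) bMI(1) unfolding \<gamma>_def MIall_def by auto
    have beq: "\<beta> = (\<lambda>i. \<alpha> i + \<gamma> i)" using a(2) unfolding \<gamma>_def by auto
    note sp = shift_prop[OF G(1,2,4) g beq]
    define H where "H = shift \<gamma> G"
    have H: "hp n H" "ev n H = ev (deg \<alpha>) G \<otimes> mono \<gamma>" "ev n H \<in> I" "H \<beta> = c"
      "\<forall>\<delta>. lexless \<beta> \<delta> \<longrightarrow> H \<delta> = \<zero>"
      using sp bMI(2) G(3) unfolding H_def by auto
    have "\<exists>i<r. \<gamma> i > 0"
    proof (rule ccontr)
      assume "\<not> (\<exists>i<r. \<gamma> i > 0)"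
      then have "\<forall>i. \<gamma> i = 0" using g unfolding MIall_def by (auto simp: not_less)
      then have "\<beta> = \<alpha>" using beq by auto
      with a(3) show False by simp
    qed
    then obtain i where i: "i < r" "\<gamma> i > 0" by blast
    define \<gamma>' where "\<gamma>' = \<gamma>(i := \<gamma> i - 1)"
    have geq: "\<gamma> = (\<lambda>j. \<gamma>' j + ee i j)" using i unfolding \<gamma>'_def ee_def by auto
    have mg: "mono \<gamma> = mono \<gamma>' \<otimes> x i" using mono_add[of \<gamma>' "ee i"] geq mono_ee[OF i(1)] by simp
    have dg: "deg \<gamma> = deg \<gamma>' + 1" using deg_add[of \<gamma>' "ee i"] deg_ee[OF i(1)] geq by simp
    have dsum: "deg \<gamma>' + deg \<alpha> = n - 1" using bMI(2) beq deg_add[of \<alpha> \<gamma>] dg by simp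
    have Gc: "ev (deg \<alpha>) G \<in> carrier R" using G(1) by simp
    have evH: "ev n H = x i \<otimes> (mono \<gamma>' \<otimes> ev (deg \<alpha>) G)"
      using H(2) mg Gc x_carr by (simp add: m_ac)
    have inI: "mono \<gamma>' \<otimes> ev (deg \<alpha>) G \<in> I" using ideal.I_l_closed[OF I_ideal G(2)] by simp
    have "mono \<gamma>' \<otimes> ev (deg \<alpha>) G \<in> ideal_prod R (ideal_pow R mm (deg \<gamma>')) (ideal_pow R mm (deg \<alpha>))"
      by (rule ideal_prod.prod[OF mono_pow ev_pow[OF G(1)]])
    then have inP: "mono \<gamma>' \<otimes> ev (deg \<alpha>) G \<in> ideal_pow R mm (n - 1)"
      using pow_add[OF mm_ideal, of "deg \<gamma>'" "deg \<alpha>"] dsum by simp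
    have HV: "ev n H \<in> ?V" unfolding evH
      by (rule ideal_prod.prod) (use x_in_mm[OF i(1)] inI inP in auto)
    define F' where "F' = (\<lambda>\<delta>. F \<delta> \<ominus> H \<delta>)"
    have F'hp: "hp n F'" unfolding F'_def using hp_minus[OF F(1) H(1)] .
    have evF': "ev n F' = ev n F \<ominus> ev n H" unfolding F'_def using ev_minus[OF F(1) H(1)] .
    have F'I: "ev n F' \<in> I" unfolding evF' using F(2) H(3)
      by (simp add: I_ideal additive_subgroup.a_closed additive_subgroup.a_inv_closed ideal.axioms(1) minus_eq)
    have Hc: "\<And>\<delta>. H \<delta> \<in> carrier R" using H(1) unfolding hp_def by auto
    have F'0: "F' \<delta> = \<zero>" if "\<delta> = \<beta> \<or> lexless \<beta> \<delta>" for \<delta>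
      using that Fab H(4,5) Fc Hc unfolding F'_def c_def by auto
    have sub: "DF n F' \<subseteq> DF n F - {\<beta>}"
    proof
      fix \<eta> assume "\<eta> \<in> DF n F'"
      then obtain \<delta> where d: "\<eta> \<in> MI n" "\<delta> \<in> MI n" "F' \<delta> \<noteq> \<zero>" "\<eta> = \<delta> \<or> lexless \<eta> \<delta>"
        unfolding DF_def by blast
      have "lexless \<delta> \<beta>" using d(3) F'0 lex_total by blast
      then have "lexless \<eta> \<beta>" using d(4) lex_trans by blast
      then show "\<eta> \<in> DF n F - {\<beta>}" using d(1) b(1) lex_irrefl unfolding DF_def by blast
    qed
    have "\<beta> \<in> DF n F" using b(1) unfolding DF_def by blast
    then have "DF n F' \<subset> DF n F" using sub by blast
    moreover have "finite (DF n F)" using finite_MI unfolding DF_def by simp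
    ultimately have "card (DF n F') < card (DF n F)" by (rule psubset_card_mono[rotated])
    then have F'V: "ev n F' \<in> ?V" using less(1) F'hp F'I by blast
    have "ev n F = ev n F' \<oplus> ev n H"
      unfolding evF' using F(1) H(1) by (simp add: minus_eq a_assoc l_neg)
    then show ?thesis
      using F'V HV additive_subgroup.a_closed[OF ideal.axioms(1)[OF Vid]] by simp
  qed
qed


lemma dickson_arset:
  assumes noeth: "noetherian_ring R"
  shows "\<exists>s. \<forall>\<beta>\<in>MIall. deg \<beta> > s \<longrightarrow> (\<exists>\<alpha>\<in>MIall. (\<forall>i. \<alpha> i \<le> \<beta> i) \<and> \<alpha> \<noteq> \<beta> \<and> LC \<alpha> = LC \<beta>)"
proof -
  let ?B = "{\<beta> \<in> MIall. \<forall>\<alpha>\<in>MIall. (\<forall>i. \<alpha> i \<le> \<beta> i) \<and> \<alpha> \<noteq> \<beta> \<longrightarrow> LC \<alpha> \<noteq> LC \<beta>}"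
  have fin: "finite ?B"
    unfolding MIall_def
    by (rule noetherian_ring.dickson_finite[OF noeth, of LC r])
       (use LC_ideal LC_mono[unfolded MIall_def] in auto)
  define s where "s = Max (insert 0 (deg ` ?B))"
  have "\<forall>\<beta>\<in>MIall. deg \<beta> > s \<longrightarrow> (\<exists>\<alpha>\<in>MIall. (\<forall>i. \<alpha> i \<le> \<beta> i) \<and> \<alpha> \<noteq> \<beta> \<and> LC \<alpha> = LC \<beta>)"
  proof (intro ballI impI)
    fix \<beta> assume b: "\<beta> \<in> MIall" "deg \<beta> > s"
    have "\<beta> \<notin> ?B"
    proof
      assume "\<beta> \<in> ?B"
      then have "deg \<beta> \<le> s" unfolding s_def using fin by (intro Max_ge) auto
      with b(2) show False by simp
    qed
    then show "\<exists>\<alpha>\<in>MIall. (\<forall>i. \<alpha> i \<le> \<beta> i) \<and> \<alpha> \<noteq> \<beta> \<and> LC \<alpha> = LC \<beta>"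
      using b(1) by blast
  qed
  then show ?thesis by blast
qed

lemma AR_step:
  assumes noeth: "noetherian_ring R"
  shows "\<exists>s. \<forall>n>s. ideal_pow R mm n \<inter> I \<subseteq> ideal_prod R mm (I \<inter> ideal_pow R mm (n - 1))"
proof -
  obtain s where sA: "\<forall>\<beta>\<in>MIall. deg \<beta> > s \<longrightarrow> (\<exists>\<alpha>\<in>MIall. (\<forall>i. \<alpha> i \<le> \<beta> i) \<and> \<alpha> \<noteq> \<beta> \<and> LC \<alpha> = LC \<beta>)"
    using dickson_arset[OF noeth] by blast
  have "ideal_pow R mm n \<inter> I \<subseteq> ideal_prod R mm (I \<inter> ideal_pow R mm (n - 1))" if n: "n > s" for n
  proof
    fix y assume y: "y \<in> ideal_pow R mm n \<inter> I"
    then have "y \<in> EE n" using pow_EE by blast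
    then obtain F where F: "hp n F" "y = ev n F" by (rule EE_E)
    show "y \<in> ideal_prod R mm (I \<inter> ideal_pow R mm (n - 1))"
      using reduce[OF sA n F(1)] F y by blast
  qed
  then show ?thesis by blast
qed

lemma AR_exists:
  assumes noeth: "noetherian_ring R"
  shows "\<exists>t. \<forall>n\<ge>t. ideal_pow R mm n \<inter> I = ideal_prod R (ideal_pow R mm (n - t)) (ideal_pow R mm t \<inter> I)"
proof -
  obtain s where s: "\<forall>n>s. ideal_pow R mm n \<inter> I \<subseteq> ideal_prod R mm (I \<inter> ideal_pow R mm (n - 1))"
    using AR_step[OF noeth] by blast
  define t where "t = Suc s"
  let ?X = "ideal_pow R mm t \<inter> I"
  have Xid: "ideal ?X R" by (intro i_intersect pow_ideal mm_ideal I_ideal)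
  have key: "ideal_pow R mm (t + k) \<inter> I = ideal_prod R (ideal_pow R mm k) ?X" for k
  proof (induct k)
    case 0 then show ?case using carrier_prod[OF Xid] by simp
  next
    case (Suc k)
    show ?case
    proof
      have "ideal_pow R mm (t + Suc k) \<inter> I \<subseteq> ideal_prod R mm (I \<inter> ideal_pow R mm (t + k))"
        using s[rule_format, of "t + Suc k"] unfolding t_def by simp
      also have "\<dots> = ideal_prod R mm (ideal_prod R (ideal_pow R mm k) ?X)"
        using Suc by (simp add: Int_commute)
      also have "\<dots> = ideal_prod R (ideal_prod R mm (ideal_pow R mm k)) ?X"
        using ideal_prod_assoc[OF mm_ideal pow_ideal[OF mm_ideal] Xid] by simp
      also have "\<dots> = ideal_prod R (ideal_pow R mm (Suc k)) ?X"
        using pow_Suc'[OF mm_ideal, of k] by simp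
      finally show "ideal_pow R mm (t + Suc k) \<inter> I \<subseteq> ideal_prod R (ideal_pow R mm (Suc k)) ?X" .
    next
      have "ideal_prod R (ideal_pow R mm (Suc k)) ?X \<subseteq> ideal_prod R (ideal_pow R mm (Suc k)) (ideal_pow R mm t)"
        by (rule prod_mono) auto
      also have "\<dots> = ideal_pow R mm (t + Suc k)"
        using pow_add[OF mm_ideal, of "Suc k" t] by (simp add: add.commute)
      finally have A: "ideal_prod R (ideal_pow R mm (Suc k)) ?X \<subseteq> ideal_pow R mm (t + Suc k)" .
      have B: "ideal_prod R (ideal_pow R mm (Suc k)) ?X \<subseteq> I"
        using ideal_prod_inter[OF pow_ideal[OF mm_ideal] Xid] by blast
      show "ideal_prod R (ideal_pow R mm (Suc k)) ?X \<subseteq> ideal_pow R mm (t + Suc k) \<inter> I"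
        using A B by blast
    qed
  qed
  have "\<forall>n\<ge>t. ideal_pow R mm n \<inter> I = ideal_prod R (ideal_pow R mm (n - t)) ?X"
  proof (intro allI impI)
    fix n assume "t \<le> n"
    then have "n = t + (n - t)" by simp
    then show "ideal_pow R mm n \<inter> I = ideal_prod R (ideal_pow R mm (n - t)) ?X"
      using key[of "n - t"] by simp
  qed
  then show ?thesis by blast
qed

end

context cring begin

lemma local_unit:
  assumes loc: "local_ring R m" and noeth: "noetherian_ring R" and a: "a \<in> m"
  shows "\<one> \<ominus> a \<in> Units R"
proof (rule ccontr)
  interpret M: maximalideal m R using loc unfolding local_ring_def by blast
  have ac: "a \<in> carrier R" using a M.Icarr by blast
  define u where "u = \<one> \<ominus> a"
  have uc: "u \<in> carrier R" unfolding u_def using ac by simp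
  assume nu: "u \<notin> Units R"
  have P: "ideal (PIdl u) R" by (rule cgenideal_ideal[OF uc])
  have one_nP: "\<one> \<notin> PIdl u"
  proof
    assume "\<one> \<in> PIdl u"
    then obtain c where c: "c \<in> carrier R" "\<one> = c \<otimes> u" unfolding cgenideal_def by blast
    then have "u \<in> Units R" unfolding Units_def using uc m_comm[OF c(1) uc] by auto
    with nu show False by simp
  qed
  let ?A = "{J. ideal J R \<and> PIdl u \<subseteq> J \<and> \<one> \<notin> J}"
  have "\<exists>M\<in>?A. \<forall>X\<in>?A. M \<subseteq> X \<longrightarrow> X = M"
  proof (rule Zorn_Lemma2, rule ballI)
    fix C assume C: "C \<in> chains ?A"
    show "\<exists>U\<in>?A. \<forall>X\<in>C. X \<subseteq> U"
    proof (cases "C = {}")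
      case True then show ?thesis using P one_nP by auto
    next
      case False
      have sub: "C \<subseteq> ?A" using C unfolding chains_def by blast
      have tot: "\<forall>X\<in>C. \<forall>Y\<in>C. X \<subseteq> Y \<or> Y \<subseteq> X" using C unfolding chains_def chain_subset_def by blast
      have ch: "subset.chain {I. ideal I R} C"
        unfolding pred_on.chain_def using sub tot by blast
      have "\<Union>C \<in> C" by (rule noetherian_ring.ideal_chain_is_trivial[OF noeth False ch])
      then show ?thesis using sub by blast
    qed
  qed
  then obtain M where Mi: "M \<in> ?A" and Mmax: "\<forall>X\<in>?A. M \<subseteq> X \<longrightarrow> X = M" by blast
  have "maximalideal M R"
  proof (rule maximalidealI)
    show "ideal M R" using Mi by blast
    show "carrier R \<noteq> M" using Mi by auto
    fix J assume J: "ideal J R" "M \<subseteq> J" "J \<subseteq> carrier R"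
    show "J = M \<or> J = carrier R"
    proof (cases "\<one> \<in> J")
      case True then show ?thesis using ideal.one_imp_carrier[OF J(1)] by blast
    next
      case False then have "J \<in> ?A" using J Mi by blast
      then show ?thesis using Mmax J(2) by blast
    qed
  qed
  then have "M = m" using loc unfolding local_ring_def by blast
  moreover have "u \<in> M" using Mi cgenideal_self[OF uc] by blast
  ultimately have "u \<in> m" by simp
  then have "u \<oplus> a \<in> m" using a M.a_closed by blast
  moreover have "u \<oplus> a = \<one>" unfolding u_def using ac by (simp add: minus_eq a_assoc l_neg)
  ultimately have "\<one> \<in> m" by simp
  then show False using M.one_imp_carrier M.I_notcarr by simp
qed


lemma set_add_mem: "z \<in> set_add R (A) (B) \<longleftrightarrow> (\<exists>a\<in>A. \<exists>b\<in>B. z = a \<oplus> b)"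
  by (auto simp: set_add_def')

lemma set_add_left: "ideal B R \<Longrightarrow> A \<subseteq> carrier R \<Longrightarrow> A \<subseteq> set_add R (A) (B)"
proof
  fix z assume B: "ideal B R" and A: "A \<subseteq> carrier R" and z: "z \<in> A"
  have "z = z \<oplus> \<zero>" using A z by auto
  moreover have "\<zero> \<in> B" using B by (simp add: additive_subgroup.zero_closed ideal.axioms(1))
  ultimately show "z \<in> set_add R (A) (B)" using z unfolding set_add_mem by blast
qed

lemma set_add_right: "ideal A R \<Longrightarrow> B \<subseteq> carrier R \<Longrightarrow> B \<subseteq> set_add R (A) (B)"
proof
  fix z assume A: "ideal A R" and B: "B \<subseteq> carrier R" and z: "z \<in> B"
  have "z = \<zero> \<oplus> z" using B z by auto
  moreover have "\<zero> \<in> A" using A by (simp add: additive_subgroup.zero_closed ideal.axioms(1))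
  ultimately show "z \<in> set_add R (A) (B)" using z unfolding set_add_mem by blast
qed

lemma set_add_sub: "ideal C R \<Longrightarrow> A \<subseteq> C \<Longrightarrow> B \<subseteq> C \<Longrightarrow> set_add R (A) (B) \<subseteq> C"
proof
  fix z assume C: "ideal C R" and AB: "A \<subseteq> C" "B \<subseteq> C" and z: "z \<in> set_add R A B"
  then obtain a b where "a \<in> A" "b \<in> B" "z = a \<oplus> b" by (auto simp: set_add_mem)
  then show "z \<in> C" using AB additive_subgroup.a_closed[OF ideal.axioms(1)[OF C]] by blast
qed

lemma set_add_mono: "A \<subseteq> A' \<Longrightarrow> B \<subseteq> B' \<Longrightarrow> set_add R (A) (B) \<subseteq> set_add R (A') (B')"
proof
  fix z assume AB: "A \<subseteq> A'" "B \<subseteq> B'" and z: "z \<in> set_add R A B"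
  then obtain a b where "a \<in> A" "b \<in> B" "z = a \<oplus> b" by (auto simp: set_add_mem)
  then show "z \<in> set_add R A' B'" using AB unfolding set_add_mem by blast
qed

lemma nakayama:
  assumes loc: "local_ring R m" and noeth: "noetherian_ring R"
    and K: "ideal K R" and Iid: "ideal I R" and KI: "K \<subseteq> I"
    and cover: "I \<subseteq> set_add R (K) (ideal_prod R m I)"
    and Y: "finite Y"
  shows "Y \<subseteq> carrier R \<Longrightarrow> I = set_add R K (Idl Y) \<Longrightarrow> I = K"
  using Y
proof (induct Y rule: finite_induct)
  case empty
  have "Idl {} \<subseteq> {\<zero>}" by (rule genideal_minimal[OF zeroideal]) simp
  then have "set_add R (K) (Idl {}) \<subseteq> K" using K by (auto simp: set_add_mem ideal.Icarr subset_iff)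
  then show ?case using empty KI by blast
next
  case (insert y Y0)
  interpret M: maximalideal m R using loc unfolding local_ring_def by blast
  have yc: "y \<in> carrier R" and Y0c: "Y0 \<subseteq> carrier R" using insert.prems(1) by auto
  have Ieq: "I = set_add R (K) (Idl (insert y Y0))" by (rule insert.prems(2))
  have Kc: "K \<subseteq> carrier R" using ideal.Icarr[OF K] by blast
  have IdlY0c: "Idl Y0 \<subseteq> carrier R" using ideal.Icarr[OF genideal_ideal[OF Y0c]] by blast
  have IdlInsc: "Idl (insert y Y0) \<subseteq> carrier R"
    using ideal.Icarr[OF genideal_ideal[OF insert.prems(1)]] by blast
  have PIc: "PIdl y \<subseteq> carrier R" using ideal.Icarr[OF cgenideal_ideal[OF yc]] by blast
  define K' where "K' = set_add R (K) (Idl Y0)"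
  have K'id: "ideal K' R" unfolding K'_def by (intro add_ideals K genideal_ideal Y0c)
  have KK': "K \<subseteq> K'" unfolding K'_def by (rule set_add_left[OF genideal_ideal[OF Y0c] Kc])
  have Y0K': "Idl Y0 \<subseteq> K'" unfolding K'_def by (rule set_add_right[OF K IdlY0c])
  define L where "L = set_add R (Idl Y0) (PIdl y)"
  have Lid: "ideal L R" unfolding L_def by (intro add_ideals genideal_ideal Y0c cgenideal_ideal yc)
  have "insert y Y0 \<subseteq> L"
  proof -
    have "PIdl y \<subseteq> L" unfolding L_def by (rule set_add_right[OF genideal_ideal[OF Y0c] PIc])
    then have "y \<in> L" using cgenideal_self[OF yc] by blast
    moreover have "Idl Y0 \<subseteq> L" unfolding L_def by (rule set_add_left[OF cgenideal_ideal[OF yc] IdlY0c])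
    then have "Y0 \<subseteq> L" using genideal_self[OF Y0c] by blast
    ultimately show ?thesis by blast
  qed
  then have IL: "Idl (insert y Y0) \<subseteq> L" by (rule genideal_minimal[OF Lid])
  have IKL: "I \<subseteq> set_add R (K) (L)" using Ieq set_add_mono[OF subset_refl IL] by simp
  have insI: "Idl (insert y Y0) \<subseteq> I" unfolding Ieq by (rule set_add_right[OF K IdlInsc])
  have yI: "y \<in> I" using insI genideal_self[OF insert.prems(1)] by blast
  have Y0I: "Idl Y0 \<subseteq> I"
    by (rule genideal_minimal[OF Iid]) (use insI genideal_self[OF insert.prems(1)] in blast)
  have W: "w \<in> ideal_prod R m I \<Longrightarrow> \<exists>k\<in>K'. \<exists>a\<in>m. w = k \<oplus> a \<otimes> y" for w
  proof (induct w rule: ideal_prod.induct)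
    case (prod i j)
    then have ic: "i \<in> carrier R" using M.Icarr by blast
    from prod(2) IKL have "j \<in> set_add R K L" by blast
    then obtain k l where kl: "k \<in> K" "l \<in> L" "j = k \<oplus> l" unfolding set_add_mem by blast
    from kl(2) obtain k0 d where k0: "k0 \<in> Idl Y0" "d \<in> PIdl y" "l = k0 \<oplus> d"
      unfolding L_def set_add_mem by blast
    from k0(2) obtain c where c: "c \<in> carrier R" "d = c \<otimes> y" unfolding cgenideal_def by blast
    have kc: "k \<in> carrier R" "k0 \<in> carrier R" using kl(1) k0(1) Kc IdlY0c by blast+
    have kk: "k \<oplus> k0 \<in> K'" unfolding K'_def set_add_mem using kl(1) k0(1) by blast
    have e: "i \<otimes> j = i \<otimes> (k \<oplus> k0) \<oplus> (i \<otimes> c) \<otimes> y"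
      using ic kc c yc unfolding kl(3) k0(3) by (simp add: r_distr m_assoc a_assoc)
    have "i \<otimes> (k \<oplus> k0) \<in> K'" using ideal.I_l_closed[OF K'id kk ic] .
    moreover have "i \<otimes> c \<in> m" using M.I_r_closed[OF prod(1) c(1)] .
    ultimately show ?case using e by blast
  next
    case (sum s1 s2)
    then obtain k1 a1 k2 a2 where ka: "k1 \<in> K'" "a1 \<in> m" "s1 = k1 \<oplus> a1 \<otimes> y"
      "k2 \<in> K'" "a2 \<in> m" "s2 = k2 \<oplus> a2 \<otimes> y" by blast
    have K'c: "K' \<subseteq> carrier R" using ideal.Icarr[OF K'id] by blast
    have c: "k1 \<in> carrier R" "k2 \<in> carrier R" "a1 \<in> carrier R" "a2 \<in> carrier R"
      using ka K'c M.Icarr by blast+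
    have e: "s1 \<oplus> s2 = (k1 \<oplus> k2) \<oplus> (a1 \<oplus> a2) \<otimes> y"
      unfolding ka(3,6) using c yc by (simp add: l_distr a_ac)
    have "k1 \<oplus> k2 \<in> K'" using ka K'id by (simp add: additive_subgroup.a_closed ideal.axioms(1))
    moreover have "a1 \<oplus> a2 \<in> m" using ka M.a_closed by blast
    ultimately show ?case using e by blast
  qed
  from yI cover have "y \<in> set_add R K (ideal_prod R m I)" by blast
  then obtain k w where kw: "k \<in> K" "w \<in> ideal_prod R m I" "y = k \<oplus> w"
    unfolding set_add_mem by blast
  from W[OF kw(2)] obtain k' a where ka: "k' \<in> K'" "a \<in> m" "w = k' \<oplus> a \<otimes> y" by blast
  define kk where "kk = k \<oplus> k'"
  have kkK: "kk \<in> K'" unfolding kk_def using KK' kw(1) ka(1) K'id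
    by (simp add: additive_subgroup.a_closed ideal.axioms(1) subsetD)
  have ac: "a \<in> carrier R" using ka(2) M.Icarr by blast
  have kc: "k \<in> carrier R" "k' \<in> carrier R" using kw(1) ka(1) Kc KK' Y0K' ideal.Icarr[OF K'id] by blast+
  have yeq: "y = kk \<oplus> a \<otimes> y" unfolding kk_def using kw(3) ka(3) kc ac yc by (simp add: a_assoc)
  have kkc: "kk \<in> carrier R" unfolding kk_def using kc by simp
  have "(\<one> \<ominus> a) \<otimes> y = y \<ominus> a \<otimes> y" using ac yc by (simp add: minus_eq l_distr l_minus)
  also have "\<dots> = (kk \<oplus> a \<otimes> y) \<ominus> a \<otimes> y" using arg_cong[OF yeq, of "\<lambda>z. z \<ominus> a \<otimes> y"] .
  also have "\<dots> = kk" using kkc ac yc by (simp add: minus_eq a_assoc r_neg)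
  finally have uy: "(\<one> \<ominus> a) \<otimes> y = kk" .
  have u: "\<one> \<ominus> a \<in> Units R" by (rule local_unit[OF loc noeth ka(2)])
  have uc: "\<one> \<ominus> a \<in> carrier R" and ic: "inv (\<one> \<ominus> a) \<in> carrier R" using u by auto
  have "inv (\<one> \<ominus> a) \<otimes> ((\<one> \<ominus> a) \<otimes> y) = (inv (\<one> \<ominus> a) \<otimes> (\<one> \<ominus> a)) \<otimes> y"
    by (rule m_assoc[symmetric, OF ic uc yc])
  also have "\<dots> = y" using Units_l_inv[OF u] yc by simp
  finally have "y = inv (\<one> \<ominus> a) \<otimes> ((\<one> \<ominus> a) \<otimes> y)" by simp
  also have "\<dots> \<in> K'" unfolding uy using ideal.I_l_closed[OF K'id kkK] u by simp
  finally have yK': "y \<in> K'" .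
  have "insert y Y0 \<subseteq> K'" using yK' Y0K' genideal_self[OF Y0c] by blast
  then have "Idl (insert y Y0) \<subseteq> K'" by (rule genideal_minimal[OF K'id])
  then have "I \<subseteq> K'" unfolding Ieq using set_add_sub[OF K'id KK'] by blast
  moreover have "K' \<subseteq> I" unfolding K'_def using set_add_sub[OF Iid KI Y0I] .
  ultimately have "I = set_add R (K) (Idl Y0)" unfolding K'_def by blast
  then show ?case using insert.hyps(3) Y0c by blast
qed

end

lemma (in cring) main_lemma:
  fixes m I J :: "'a set" and N :: nat
  assumes "noetherian_ring R"
    and "local_ring R m"
    and "ideal I R"
    and "ideal J R"
    and "N > AR_number R m I"
    and "set_add R I (ideal_pow R m N) = set_add R J (ideal_pow R m N)"
  shows "min_gens R I \<le> min_gens R J"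
proof -
  have cr: "cring R" by (rule is_cring)
  interpret N: noetherian_ring R by (rule assms(1))
  have mid: "ideal m R" using assms(2) unfolding local_ring_def using maximalideal.axioms(1) by blast
  obtain X where X: "X \<subseteq> carrier R" "finite X" "m = Idl X" using N.finetely_gen[OF mid] by blast
  obtain r and e :: "nat \<Rightarrow> 'a" where re: "X = e ` {i. i < r}" using finite_imp_nat_seg_image_inj_on[OF X(2)] by auto
  define x where "x i = (if i < r then e i else \<zero>)" for i
  have xc: "\<And>i. x i \<in> carrier R" using X(1) re unfolding x_def by auto
  have xX: "x ` {..<r} = X" unfolding re x_def by (auto simp: lessThan_def)
  interpret A: arset R r x I
    by (rule arset.intro[OF cr], rule arset_axioms.intro[OF xc assms(3)])
  have mmeq: "A.mm = m" unfolding A.mm_def xX X(3) ..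
  obtain t where t: "\<forall>n\<ge>t. ideal_pow R m n \<inter> I = ideal_prod R (ideal_pow R m (n - t)) (ideal_pow R m t \<inter> I)"
    using A.AR_exists[OF assms(1)] unfolding mmeq by blast
  define s where "s = AR_number R m I"
  have sprop: "\<forall>n\<ge>s. ideal_pow R m n \<inter> I = ideal_prod R (ideal_pow R m (n - s)) (ideal_pow R m s \<inter> I)"
    unfolding s_def AR_number_def by (rule LeastI_ex) (use t in blast)
  have key: "ideal_pow R m N \<inter> I \<subseteq> ideal_prod R m I"
  proof -
    have Ns: "N \<ge> s" "N - s = Suc (N - s - 1)" using assms(5) unfolding s_def by auto
    have "ideal_pow R m N \<inter> I = ideal_prod R (ideal_pow R m (N - s)) (ideal_pow R m s \<inter> I)"
      using sprop Ns(1) by blast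
    also have "\<dots> \<subseteq> ideal_prod R m I"
      by (rule prod_mono) (use pow_Suc_sub[OF mid, of "N - s - 1"] Ns(2) in auto)
    finally show ?thesis .
  qed
  let ?P = "\<lambda>n. \<exists>S. finite S \<and> card S = n \<and> S \<subseteq> carrier R \<and> Idl S = J"
  obtain A0 where A0: "A0 \<subseteq> carrier R" "finite A0" "J = Idl A0" using N.finetely_gen[OF assms(4)] by blast
  have "?P (card A0)" using A0 by blast
  then have "?P (LEAST n. ?P n)" by (rule LeastI)
  then obtain S where S: "finite S" "card S = min_gens R J" "S \<subseteq> carrier R" "Idl S = J"
    unfolding min_gens_def by blast
  let ?mN = "ideal_pow R m N"
  have mNid: "ideal ?mN R" by (rule pow_ideal[OF mid])
  have Ic: "I \<subseteq> carrier R" using ideal.Icarr[OF assms(3)] by blast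
  have Jc: "J \<subseteq> carrier R" using ideal.Icarr[OF assms(4)] by blast
  have Jsub: "J \<subseteq> set_add R I ?mN" using set_add_left[OF mNid Jc] assms(6) by simp
  have "\<forall>g\<in>S. \<exists>a. a \<in> I \<and> (\<exists>b\<in>?mN. g = a \<oplus> b)"
  proof
    fix g assume "g \<in> S"
    then have "g \<in> J" using genideal_self[OF S(3)] S(4) by blast
    then have "g \<in> set_add R I ?mN" using Jsub by blast
    then show "\<exists>a. a \<in> I \<and> (\<exists>b\<in>?mN. g = a \<oplus> b)" unfolding set_add_mem by blast
  qed
  then obtain f where f: "\<forall>g\<in>S. f g \<in> I \<and> (\<exists>b\<in>?mN. g = f g \<oplus> b)" by (metis (no_types, lifting) bchoice)
  define T where "T = f ` S"
  have TI: "T \<subseteq> I" unfolding T_def using f by blast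
  have Tc: "T \<subseteq> carrier R" using TI Ic by blast
  have Tfin: "finite T" unfolding T_def using S(1) by simp
  have Tcard: "card T \<le> card S" unfolding T_def using S(1) by (rule card_image_le)
  define K where "K = Idl T"
  have Kid: "ideal K R" unfolding K_def by (rule genideal_ideal[OF Tc])
  have KI: "K \<subseteq> I" unfolding K_def by (rule genideal_minimal[OF assms(3) TI])
  have Kc: "K \<subseteq> carrier R" using KI Ic by blast
  have JK: "J \<subseteq> set_add R K ?mN"
  proof -
    have "S \<subseteq> set_add R K ?mN"
    proof
      fix g assume g: "g \<in> S"
      then obtain b where b: "b \<in> ?mN" "g = f g \<oplus> b" using f by blast
      have "f g \<in> K" unfolding K_def using genideal_self[OF Tc] g unfolding T_def by blast
      then show "g \<in> set_add R K ?mN" unfolding set_add_mem using b by blast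
    qed
    then have "Idl S \<subseteq> set_add R K ?mN" by (rule genideal_minimal[OF add_ideals[OF Kid mNid]])
    then show ?thesis using S(4) by simp
  qed
  have cover: "I \<subseteq> set_add R K (ideal_prod R m I)"
  proof
    fix z assume z: "z \<in> I"
    then have "z \<in> set_add R J ?mN" using set_add_left[OF mNid Ic] assms(6) by blast
    then obtain j b where jb: "j \<in> J" "b \<in> ?mN" "z = j \<oplus> b" unfolding set_add_mem by blast
    then have "j \<in> set_add R K ?mN" using JK by blast
    then obtain k b' where kb: "k \<in> K" "b' \<in> ?mN" "j = k \<oplus> b'" unfolding set_add_mem by blast
    define w where "w = b' \<oplus> b"
    have mNc: "?mN \<subseteq> carrier R" using ideal.Icarr[OF mNid] by blast
    have kc: "k \<in> carrier R" using kb(1) Kc by blast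
    have wc: "w \<in> carrier R" unfolding w_def using kb(2) jb(2) mNc by blast
    have bc: "b \<in> carrier R" "b' \<in> carrier R" using kb(2) jb(2) mNc by blast+
    have zeq: "z = k \<oplus> w" unfolding w_def jb(3) kb(3) by (rule a_assoc[OF kc bc(2) bc(1)])
    have wmN: "w \<in> ?mN" unfolding w_def using kb(2) jb(2) additive_subgroup.a_closed[OF ideal.axioms(1)[OF mNid]] by blast
    have "\<ominus> k \<oplus> z = w" unfolding zeq using kc wc by (simp add: a_assoc[symmetric] l_neg)
    moreover have "\<ominus> k \<oplus> z \<in> I"
      using kb(1) KI z additive_subgroup.a_closed[OF ideal.axioms(1)[OF assms(3)]]
        additive_subgroup.a_inv_closed[OF ideal.axioms(1)[OF assms(3)]] by blast
    ultimately have "w \<in> ?mN \<inter> I" using wmN by simp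
    then have "w \<in> ideal_prod R m I" using key by blast
    then show "z \<in> set_add R K (ideal_prod R m I)" unfolding set_add_mem using zeq kb(1) by blast
  qed
  obtain Y where Y: "Y \<subseteq> carrier R" "finite Y" "I = Idl Y" using N.finetely_gen[OF assms(3)] by blast
  have IKY: "I = set_add R K (Idl Y)"
  proof
    show "I \<subseteq> set_add R K (Idl Y)" using set_add_right[OF Kid, of "Idl Y"] Y(3) Ic by simp
    show "set_add R K (Idl Y) \<subseteq> I" using set_add_sub[OF assms(3) KI] Y(3) by simp
  qed
  have "I = K" by (rule nakayama[OF assms(2) assms(1) Kid assms(3) KI cover Y(2) Y(1) IKY])
  have "min_gens R I \<le> card T"
    unfolding min_gens_def by (rule Least_le) (use \<open>I = K\<close> Tfin Tc in \<open>auto simp: K_def\<close>)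
  then show ?thesis using Tcard S(2) by simp
qed

theorem proposition3p4:
  fixes R :: "('a, 'b) ring_scheme" and m I J :: "'a set" and N :: nat
  assumes "noetherian_ring R"
    and "local_ring R m"
    and "ideal I R"
    and "ideal J R"
    and "N > AR_number R m I"
    and "set_add R I (ideal_pow R m N) = set_add R J (ideal_pow R m N)"
  shows "min_gens R I \<le> min_gens R J"
proof -
  have cr: "cring R" using assms(2) unfolding local_ring_def by blast
  show ?thesis by (rule cring.main_lemma[OF cr assms])
qed

end
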